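(* Let $k$ be a positive integer and $\mathbb{A}$ an alphabet with exactly $k$ letters. The number of extremal $XY_1XY_2X$-avoiding words over $\mathbb{A}$ is $\frac{(2k)!}{2^k}$.
   Context: A word is a finite sequence of letters. A factor of $W$ is a word $U$ with $W=W_1UW_2$ for some (possibly empty) words $W_1,W_2$. A word $W$ contains the pattern $XY_1XY_2X$ if some factor of $W$ can be written as $AB_1AB_2A$ with $A,B_1,B_2$ nonempty words (not necessarily distinct from one another); otherwise $W$ avoids $XY_1XY_2X$. An extension of a word $W$ over $\mathbb{A}$ is any word $W_1xW_2$ with $W=W_1W_2$ ($W_1,W_2$ possibly empty) and $x\in\mathbb{A}$. A word over $\mathbb{A}$ is extremal $XY_1XY_2X$-avoiding if it avoids $XY_1XY_2X$ and every extension of it contains $XY_1XY_2X$. *)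

theory Defs
  imports Complex_Main
begin

definition is_factor :: "'a list \<Rightarrow> 'a list \<Rightarrow> bool" where
  "is_factor u w \<longleftrightarrow> (\<exists>w1 w2. w = w1 @ u @ w2)"

definition contains_XYXYX :: "'a list \<Rightarrow> bool" where
  "contains_XYXYX w \<longleftrightarrow>
     (\<exists>a b1 b2. a \<noteq> [] \<and> b1 \<noteq> [] \<and> b2 \<noteq> [] \<and> is_factor (a @ b1 @ a @ b2 @ a) w)"

definition avoids_XYXYX :: "'a list \<Rightarrow> bool" where
  "avoids_XYXYX w \<longleftrightarrow> \<not> contains_XYXYX w"

definition is_extension :: "'a set \<Rightarrow> 'a list \<Rightarrow> 'a list \<Rightarrow> bool" where
  "is_extension A w v \<longleftrightarrow> (\<exists>w1 w2 x. w = w1 @ w2 \<and> x \<in> A \<and> v = w1 @ [x] @ w2)"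

definition extremal_XYXYX :: "'a set \<Rightarrow> 'a list \<Rightarrow> bool" where
  "extremal_XYXYX A w \<longleftrightarrow>
     set w \<subseteq> A \<and> avoids_XYXYX w \<and> (\<forall>v. is_extension A w v \<longrightarrow> contains_XYXYX v)"

end

theory Submission
  imports Defs "HOL-Combinatorics.Multiset_Permutations"
begin

definition pos :: "'a list \<Rightarrow> 'a \<Rightarrow> nat set" where
  "pos w z = {i. i < length w \<and> w ! i = z}"

definition bad :: "nat set \<Rightarrow> bool" where
  "bad P \<longleftrightarrow> (\<exists>i j l. i \<in> P \<and> j \<in> P \<and> l \<in> P \<and> i + 2 \<le> j \<and> j + 2 \<le> l)"

lemma bad_mono: "bad P \<Longrightarrow> P \<subseteq> Q \<Longrightarrow> bad Q"
  unfolding bad_def by blast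

lemma bad_map:
  assumes "bad P" "g ` P \<subseteq> Q" "\<And>i j. i \<in> P \<Longrightarrow> j \<in> P \<Longrightarrow> i + 2 \<le> j \<Longrightarrow> g i + 2 \<le> g j"
  shows "bad Q"
proof -
  from assms(1) obtain i j l where "i \<in> P" "j \<in> P" "l \<in> P" "i + 2 \<le> j" "j + 2 \<le> l"
    unfolding bad_def by blast
  with assms(2,3) show ?thesis unfolding bad_def by (metis image_subset_iff)
qed

lemma drop_split: "m \<le> n \<Longrightarrow> drop m w = take (n - m) (drop m w) @ drop n w"
  by (metis append_take_drop_id drop_drop le_add_diff_inverse2)

lemma contains_iff:
  "contains_XYXYX w \<longleftrightarrow> (\<exists>z. bad (pos w z))"
proof
  assume "contains_XYXYX w"
  then obtain a b1 b2 w1 w2 where ne: "a \<noteq> []" "b1 \<noteq> []" "b2 \<noteq> []"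
    and w: "w = w1 @ (a @ b1 @ a @ b2 @ a) @ w2"
    unfolding contains_XYXYX_def is_factor_def by blast
  define i where "i = length w1"
  define j where "j = i + length a + length b1"
  define l where "l = j + length a + length b2"
  have "w ! i = a ! 0" unfolding i_def w using ne by (simp add: nth_append)
  moreover have "w ! j = a ! 0" unfolding j_def i_def w using ne
    by (simp add: nth_append)
  moreover have "w ! l = a ! 0" unfolding l_def j_def i_def w using ne
    by (simp add: nth_append)
  moreover have "l < length w" unfolding l_def j_def i_def w using ne by simp
  moreover have "length a \<ge> 1" "length b1 \<ge> 1" "length b2 \<ge> 1" using ne
    by (auto simp: Suc_le_eq)
  then have "i + 2 \<le> j" "j + 2 \<le> l" unfolding l_def j_def by auto
  ultimately have "bad (pos w (a ! 0))" unfolding bad_def pos_def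
    by (intro exI[of _ i] exI[of _ j] exI[of _ l]) auto
  then show "\<exists>z. bad (pos w z)" by blast
next
  assume "\<exists>z. bad (pos w z)"
  then obtain z i j l where ij: "i + 2 \<le> j" "j + 2 \<le> l" "l < length w"
    and z: "w ! i = z" "w ! j = z" "w ! l = z"
    unfolding bad_def pos_def by blast
  define b1 where "b1 = take (j - Suc i) (drop (Suc i) w)"
  define b2 where "b2 = take (l - Suc j) (drop (Suc j) w)"
  have e1: "w = take i w @ [z] @ drop (Suc i) w" using ij z
    by (metis append_Cons append_self_conv2 id_take_nth_drop less_trans le_less_trans add_lessD1 le_add1 order.strict_trans2)
  have e2: "drop (Suc i) w = b1 @ drop j w" unfolding b1_def using ij
    by (intro drop_split) auto
  have jl: "j < length w" using ij by linarith
  have e3: "drop j w = [z] @ drop (Suc j) w" using jl z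
    by (metis Cons_nth_drop_Suc append_Cons append_Nil)
  have e4: "drop (Suc j) w = b2 @ drop l w" unfolding b2_def using ij
    by (intro drop_split) auto
  have e5: "drop l w = [z] @ drop (Suc l) w" using ij z
    by (metis Cons_nth_drop_Suc append_Cons append_Nil)
  have "w = take i w @ ([z] @ b1 @ [z] @ b2 @ [z]) @ drop (Suc l) w"
    using e1 e2 e3 e4 e5 by simp
  moreover have "b1 \<noteq> []" "b2 \<noteq> []" unfolding b1_def b2_def using ij by auto
  ultimately show "contains_XYXYX w"
    unfolding contains_XYXYX_def is_factor_def by blast
qed


definition ins :: "nat \<Rightarrow> 'a \<Rightarrow> 'a list \<Rightarrow> 'a list" where
  "ins q y w = take q w @ y # drop q w"

lemma ins_length[simp]: "q \<le> length w \<Longrightarrow> length (ins q y w) = Suc (length w)"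
  unfolding ins_def by simp

lemma ins_nth: "q \<le> length w \<Longrightarrow> i < Suc (length w) \<Longrightarrow>
  ins q y w ! i = (if i < q then w ! i else if i = q then y else w ! (i - 1))"
  unfolding ins_def by (auto simp: nth_append min_def nth_Cons')

lemma ins_other:
  assumes q: "q \<le> length w" and qy: "q = 0 \<or> w ! (q - 1) = y" and zy: "z \<noteq> y"
    and b: "bad (pos (ins q y w) z)"
  shows "bad (pos w z)"
proof (rule bad_map[OF b, where g = "\<lambda>i. if i < q then i else i - 1"])
  show "(\<lambda>i. if i < q then i else i - 1) ` pos (ins q y w) z \<subseteq> pos w z"
    using q zy by (auto simp: pos_def ins_nth split: if_splits)
next
  fix i j assume i: "i \<in> pos (ins q y w) z" and j: "j \<in> pos (ins q y w) z" and ij: "i + 2 \<le> j"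
  have iq: "i \<noteq> q" "j \<noteq> q" using i j q zy by (auto simp: pos_def ins_nth)
  have "i < q \<Longrightarrow> i + 2 \<le> q"
  proof (rule ccontr)
    assume "i < q" "\<not> i + 2 \<le> q"
    then have "i = q - 1" "q > 0" by auto
    then show False using i qy q zy by (auto simp: pos_def ins_nth)
  qed
  then show "(if i < q then i else i - 1) + 2 \<le> (if j < q then j else j - 1)"
    using ij iq by auto
qed

lemma ins_self0: "y \<notin> set w \<Longrightarrow> pos (ins 0 y w) y \<subseteq> {0}"
proof
  fix x assume "y \<notin> set w" "x \<in> pos (ins 0 y w) y"
  then show "x \<in> {0}"
    by (cases x) (auto simp: pos_def ins_nth in_set_conv_nth)
qed

lemma not_bad_single: "\<not> bad {a}"
  by (auto simp: bad_def)

definition dbl_at :: "nat set \<Rightarrow> nat \<Rightarrow> nat set" where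
  "dbl_at P p = {i\<in>P. i \<le> p} \<union> {Suc p} \<union> Suc ` {i\<in>P. p < i}"

lemma ins_self_dbl:
  assumes "p < length w" "w ! p = y"
  shows "pos (ins (Suc p) y w) y \<subseteq> dbl_at (pos w y) p"
proof
  fix i assume i: "i \<in> pos (ins (Suc p) y w) y"
  then have il: "i < Suc (length w)" and iy: "ins (Suc p) y w ! i = y"
    using assms by (auto simp: pos_def)
  show "i \<in> dbl_at (pos w y) p"
  proof (cases "i \<le> p")
    case True then show ?thesis using iy il assms by (auto simp: ins_nth pos_def dbl_at_def)
  next
    case False
    show ?thesis
    proof (cases "i = Suc p")
      case True then show ?thesis by (auto simp: dbl_at_def)
    next
      case False
      with \<open>\<not> i \<le> p\<close> have "i = Suc (i - 1)" "p < i - 1" by auto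
      moreover have "i - 1 \<in> pos w y" using iy il assms False \<open>\<not> i \<le> p\<close>
        by (auto simp: ins_nth pos_def)
      ultimately show ?thesis unfolding dbl_at_def by blast
    qed
  qed
qed

lemma dbl_isolated:
  assumes "p \<in> P" "\<And>i. i \<in> P \<Longrightarrow> Suc i \<noteq> p" "Suc p \<notin> P" "bad (dbl_at P p)"
  shows "bad P"
proof (rule bad_map[OF assms(4), where g = "\<lambda>i. if i \<le> p then i else i - 1"])
  show "(\<lambda>i. if i \<le> p then i else i - 1) ` dbl_at P p \<subseteq> P"
    using assms(1) by (auto simp: dbl_at_def)
next
  fix i j assume i: "i \<in> dbl_at P p" and j: "j \<in> dbl_at P p" and ij: "i + 2 \<le> j"
  have jn: "j \<noteq> Suc (Suc p)" using j assms(3) by (auto simp: dbl_at_def)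
  have inn: "i \<noteq> p - 1 \<or> p = 0" using i assms(2) by (cases p) (auto simp: dbl_at_def)
  show "(if i \<le> p then i else i - 1) + 2 \<le> (if j \<le> p then j else j - 1)"
    using ij jn inn by auto
qed

lemma dbl_span:
  assumes "\<And>i. i \<in> P \<Longrightarrow> a \<le> i \<and> i \<le> a + 2"
  shows "\<not> bad (dbl_at P a)"
proof
  have rng: "a \<le> x \<and> x \<le> a + 3" if "x \<in> dbl_at P a" for x
  proof -
    have "(x \<in> P \<and> x \<le> a) \<or> x = Suc a \<or> (\<exists>y. y \<in> P \<and> x = Suc y)"
      using that unfolding dbl_at_def by blast
    then show ?thesis using assms by fastforce
  qed
  assume "bad (dbl_at P a)"
  then obtain i j l where "i \<in> dbl_at P a" "l \<in> dbl_at P a" "i + 2 \<le> j" "j + 2 \<le> l"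
    unfolding bad_def by blast
  then show False using rng[of i] rng[of l] by linarith
qed

lemma five_bad:
  assumes "finite P" "card P \<ge> 5"
  shows "bad P"
proof -
  have "P \<noteq> {}" using assms by auto
  define a where "a = Min P"
  have a: "a \<in> P" "\<And>i. i \<in> P \<Longrightarrow> a \<le> i" using assms \<open>P \<noteq> {}\<close> by (auto simp: a_def)
  define Q where "Q = P - {a, Suc a}"
  have "card P - card {a, Suc a} \<le> card Q" unfolding Q_def
    by (rule diff_card_le_card_Diff) simp
  then have cQ: "card Q \<ge> 3" using assms by simp
  then have "Q \<noteq> {}" by auto
  have fQ: "finite Q" using assms by (simp add: Q_def)
  define b where "b = Min Q"
  have b: "b \<in> Q" "\<And>i. i \<in> Q \<Longrightarrow> b \<le> i" using fQ \<open>Q \<noteq> {}\<close> by (auto simp: b_def)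
  define R where "R = Q - {b, Suc b}"
  have "card Q - card {b, Suc b} \<le> card R" unfolding R_def
    by (rule diff_card_le_card_Diff) simp
  then have "card R \<ge> 1" using cQ by simp
  then obtain c where c: "c \<in> R" by (metis card.empty ex_in_conv not_one_le_zero)
  have "a + 2 \<le> b" using b a unfolding Q_def by (metis DiffE insertCI le_antisym not_less_eq_eq add_2_eq_Suc')
  moreover have "b + 2 \<le> c" using b c unfolding R_def by (metis DiffE insertCI le_antisym not_less_eq_eq add_2_eq_Suc')
  moreover have "b \<in> P" "c \<in> P" using b c by (auto simp: Q_def R_def)
  ultimately show ?thesis using a unfolding bad_def by blast
qed

lemma struct_P:
  assumes fin: "finite P" and ne: "P \<noteq> {}" and nb: "\<not> bad P"
    and all: "\<And>p. p \<in> P \<Longrightarrow> bad (dbl_at P p)"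
  shows "\<exists>a b. a + 2 \<le> b \<and> P = {a, Suc a, b, Suc b}"
proof -
  define a where "a = Min P"
  define m where "m = Max P"
  have a: "a \<in> P" "\<And>x. x \<in> P \<Longrightarrow> a \<le> x" using fin ne by (auto simp: a_def)
  have m: "m \<in> P" "\<And>x. x \<in> P \<Longrightarrow> x \<le> m" using fin ne by (auto simp: m_def)
  have m3: "a + 3 \<le> m"
  proof (rule ccontr)
    assume h: "\<not> a + 3 \<le> m"
    have "a \<le> i \<and> i \<le> a + 2" if "i \<in> P" for i
    proof -
      have "a \<le> i" "i \<le> m" using a(2)[OF that] m(2)[OF that] .
      then show ?thesis using h by linarith
    qed
    then have "\<not> bad (dbl_at P a)" by (rule dbl_span)
    with all[OF a(1)] show False by blast
  qed
  have a1: "Suc a \<in> P"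
  proof (rule ccontr)
    assume h: "Suc a \<notin> P"
    have "Suc i \<noteq> a" if "i \<in> P" for i
    proof -
      have "a \<le> i" using a(2)[OF that] .
      then show ?thesis by linarith
    qed
    then have "bad P" using dbl_isolated[OF a(1) _ h all[OF a(1)]] by blast
    with nb show False by blast
  qed
  have m1: "m - 1 \<in> P"
  proof (rule ccontr)
    assume h: "m - 1 \<notin> P"
    have "Suc i \<noteq> m" if "i \<in> P" for i
    proof
      assume "Suc i = m"
      then have "i = m - 1" by linarith
      with that h show False by blast
    qed
    moreover have "Suc m \<notin> P"
    proof
      assume "Suc m \<in> P"
      then have "Suc m \<le> m" by (rule m(2))
      then show False by linarith
    qed
    ultimately have "bad P" using dbl_isolated[OF m(1) _ _ all[OF m(1)]] by blast
    with nb show False by blast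
  qed
  define b where "b = m - 1"
  have mb: "m = Suc b" "a + 2 \<le> b" using m3 unfolding b_def by linarith+
  have "P = {a, Suc a, b, Suc b}"
  proof
    show "{a, Suc a, b, Suc b} \<subseteq> P" using a(1) a1 m1 m(1) mb(1) unfolding b_def by simp
  next
    show "P \<subseteq> {a, Suc a, b, Suc b}"
    proof
      fix x assume x: "x \<in> P"
      show "x \<in> {a, Suc a, b, Suc b}"
      proof (rule ccontr)
        assume "x \<notin> {a, Suc a, b, Suc b}"
        then have ne4: "x \<noteq> a" "x \<noteq> Suc a" "x \<noteq> b" "x \<noteq> Suc b" by auto
        have "a \<le> x" "x \<le> m" using a(2)[OF x] m(2)[OF x] .
        then have "a + 2 \<le> x" "x + 2 \<le> m" using ne4 mb(1) by linarith+
        then have "bad P" using a(1) x m(1) unfolding bad_def by blast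
        with nb show False by blast
      qed
    qed
  qed
  with mb show ?thesis by blast
qed

definition dbl :: "'a list \<Rightarrow> 'a list" where
  "dbl u = concat (map (\<lambda>x. [x, x]) u)"

lemma dbl_Nil[simp]: "dbl [] = []" and dbl_Cons[simp]: "dbl (x # u) = x # x # dbl u"
  by (simp_all add: dbl_def)

lemma dbl_length[simp]: "length (dbl u) = 2 * length u"
  by (induction u) auto

lemma dbl_nth: "i < 2 * length u \<Longrightarrow> dbl u ! i = u ! (i div 2)"
proof (induction u arbitrary: i)
  case Nil then show ?case by simp
next
  case (Cons x u)
  show ?case
  proof (cases i)
    case 0 then show ?thesis by simp
  next
    case (Suc i1)
    show ?thesis
    proof (cases i1)
      case 0 then show ?thesis using Suc by simp
    next
      case (Suc i2)
      then have "i2 < 2 * length u" using Cons.prems \<open>i = Suc i1\<close> by simp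
      then show ?thesis using Cons.IH[of i2] Suc \<open>i = Suc i1\<close> by simp
    qed
  qed
qed

lemma dbl_inj: "dbl u = dbl v \<Longrightarrow> u = v"
proof (induction u arbitrary: v)
  case Nil then show ?case by (cases v) auto
next
  case (Cons x u) then show ?case by (cases v) auto
qed

lemma dbl_set[simp]: "set (dbl u) = set u"
  by (induction u) auto

lemma dbl_count[simp]: "count (mset (dbl u)) x = 2 * count (mset u) x"
  by (induction u) auto

lemma count_pos: "count (mset u) y = card (pos u y)"
  by (simp add: count_mset count_list_eq_length_filter length_filter_conv_card pos_def eq_commute)

lemma finite_pos[simp]: "finite (pos u y)"
  unfolding pos_def by simp

definition form :: "nat set \<Rightarrow> bool" where
  "form S \<longleftrightarrow> S = {} \<or> (\<exists>a. S = {a, Suc a}) \<or> (\<exists>a b. a + 2 \<le> b \<and> S = {a, Suc a, b, Suc b})"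

lemma form_01: "form S \<Longrightarrow> 0 \<in> S \<Longrightarrow> Suc 0 \<in> S"
  unfolding form_def by auto

lemma form_shift:
  assumes "form S" "0 \<in> S \<longleftrightarrow> Suc 0 \<in> S"
  shows "form {i. Suc (Suc i) \<in> S}"
  using assms(1) unfolding form_def[of S]
proof (elim disjE exE conjE)
  assume "S = {}" then show ?thesis unfolding form_def by simp
next
  fix a assume S: "S = {a, Suc a}"
  show ?thesis
  proof (cases "a = 0")
    case True then show ?thesis unfolding form_def using S by auto
  next
    case False
    then have "a \<noteq> 1" using S assms(2) by auto
    with False have "a \<ge> 2" by simp
    then have "{i. Suc (Suc i) \<in> S} = {a - 2, Suc (a - 2)}" using S by auto
    then show ?thesis unfolding form_def by blast
  qed
next
  fix a b assume ab: "a + 2 \<le> b" and S: "S = {a, Suc a, b, Suc b}"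
  show ?thesis
  proof (cases "a = 0")
    case True
    then have "{i. Suc (Suc i) \<in> S} = {b - 2, Suc (b - 2)}" using S ab by auto
    then show ?thesis unfolding form_def by blast
  next
    case False
    then have "a \<noteq> 1" using S ab assms(2) by auto
    with False have "a \<ge> 2" by simp
    then have "{i. Suc (Suc i) \<in> S} = {a - 2, Suc (a - 2), b - 2, Suc (b - 2)}" using S ab by auto
    moreover have "a - 2 + 2 \<le> b - 2" using ab \<open>a \<ge> 2\<close> by simp
    ultimately show ?thesis unfolding form_def by blast
  qed
qed

lemma pos_shift: "pos w2 z = {i. Suc (Suc i) \<in> pos (y # y' # w2) z}"
  by (auto simp: pos_def)

lemma form_dbl: "(\<And>y. form (pos w y)) \<Longrightarrow> \<exists>u. w = dbl u"
proof (induction w rule: length_induct)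
  case (1 w)
  show ?case
  proof (cases w)
    case Nil then show ?thesis by (metis dbl_Nil)
  next
    case (Cons y w1)
    have "0 \<in> pos w y" using Cons by (simp add: pos_def)
    then have "Suc 0 \<in> pos w y" using form_01 "1.prems" by blast
    then obtain w2 where w: "w = y # y # w2" using Cons
      by (cases w1) (auto simp: pos_def)
    have "form (pos w2 z)" for z
    proof -
      have "0 \<in> pos w z \<longleftrightarrow> Suc 0 \<in> pos w z" using w by (auto simp: pos_def)
      then show ?thesis using form_shift[OF "1.prems"[of z]] pos_shift[of w2 z y y] w by simp
    qed
    moreover have "length w2 < length w" using w by simp
    ultimately obtain u where "w2 = dbl u" using "1.IH" by blast
    then have "w = dbl (y # u)" using w by simp
    then show ?thesis by blast
  qed
qed

lemma avoid_iff: "avoids_XYXYX w \<longleftrightarrow> (\<forall>z. \<not> bad (pos w z))"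
  unfolding avoids_XYXYX_def contains_iff by blast

lemma count_M: "finite A \<Longrightarrow> count (mset_set A + mset_set A) x = (if x \<in> A then 2 else 0)"
  by (simp add: count_mset_set)

lemma imp_ext:
  assumes fA: "finite A" and u: "mset u = mset_set A + mset_set A"
  shows "extremal_XYXYX A (dbl u)"
proof -
  have cu: "count (mset u) y = (if y \<in> A then 2 else 0)" for y using u count_M[OF fA] by simp
  have setu: "set u = A"
  proof -
    have "set u = set_mset (mset u)" by simp
    also have "\<dots> = A" using u fA by simp
    finally show ?thesis .
  qed
  have av: "\<not> bad (pos (dbl u) y)" for y
  proof
    assume "bad (pos (dbl u) y)"
    then obtain i j l where ijl: "i \<in> pos (dbl u) y" "j \<in> pos (dbl u) y" "l \<in> pos (dbl u) y"
      "i + 2 \<le> j" "j + 2 \<le> l" unfolding bad_def by blast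
    have d: "i div 2 < j div 2" "j div 2 < l div 2" using ijl(4,5) by linarith+
    have "n div 2 \<in> pos u y" if "n \<in> pos (dbl u) y" for n
      using that dbl_nth[of n u] by (auto simp: pos_def)
    then have sub: "{i div 2, j div 2, l div 2} \<subseteq> pos u y" using ijl by blast
    have "card {i div 2, j div 2, l div 2} = 3" using d by simp
    then have "3 \<le> card (pos u y)" using card_mono[OF finite_pos sub] by simp
    then show False using cu[of y] count_pos[of u y] by (simp split: if_splits)
  qed
  have ext: "contains_XYXYX v" if "is_extension A (dbl u) v" for v
  proof -
    from that obtain w1 w2 x where e: "dbl u = w1 @ w2" "x \<in> A" "v = w1 @ [x] @ w2"
      unfolding is_extension_def by blast
    have "count (mset v) x = count (mset (dbl u)) x + 1" using e by simp
    also have "\<dots> = 5" using cu[of x] e(2) by simp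
    finally have "card (pos v x) \<ge> 5" using count_pos[of v x] by simp
    then have "bad (pos v x)" by (intro five_bad) simp_all
    then show ?thesis unfolding contains_iff by blast
  qed
  show ?thesis unfolding extremal_XYXYX_def avoid_iff using setu av ext by simp
qed

lemma ext_imp:
  assumes fA: "finite A" and ex: "extremal_XYXYX A w"
  shows "\<exists>u. w = dbl u \<and> mset u = mset_set A + mset_set A"
proof -
  have sw: "set w \<subseteq> A" and av: "\<And>z. \<not> bad (pos w z)"
    and allext: "\<And>v. is_extension A w v \<Longrightarrow> \<exists>z. bad (pos v z)"
    using ex unfolding extremal_XYXYX_def avoid_iff contains_iff by auto
  have inw: "y \<in> set w" if y: "y \<in> A" for y
  proof (rule ccontr)
    assume ny: "y \<notin> set w"
    have "is_extension A w (ins 0 y w)" unfolding is_extension_def ins_def using y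
      by (intro exI[of _ "[]"] exI[of _ w] exI[of _ y]) simp
    then obtain z where bz: "bad (pos (ins 0 y w) z)" using allext by blast
    show False
    proof (cases "z = y")
      case True
      then have "bad {0}" using bad_mono[OF _ ins_self0[OF ny]] bz by simp
      then show False using not_bad_single by blast
    next
      case False
      then have "bad (pos w z)" using ins_other[of 0 w y z] bz by simp
      then show False using av by blast
    qed
  qed
  have form4: "\<exists>a b. a + 2 \<le> b \<and> pos w y = {a, Suc a, b, Suc b}" if y: "y \<in> A" for y
  proof (rule struct_P)
    show "finite (pos w y)" by simp
    show "pos w y \<noteq> {}" using inw[OF y] by (auto simp: pos_def in_set_conv_nth)
    show "\<not> bad (pos w y)" by (rule av)
  next
    fix p assume p: "p \<in> pos w y"
    then have pl: "p < length w" and wp: "w ! p = y" by (auto simp: pos_def)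
    have "is_extension A w (ins (Suc p) y w)" unfolding is_extension_def ins_def using y
      by (intro exI[of _ "take (Suc p) w"] exI[of _ "drop (Suc p) w"] exI[of _ y]) simp
    then obtain z where bz: "bad (pos (ins (Suc p) y w) z)" using allext by blast
    show "bad (dbl_at (pos w y) p)"
    proof (cases "z = y")
      case True
      then show ?thesis using bad_mono[OF bz] ins_self_dbl[OF pl wp] by simp
    next
      case False
      then have "bad (pos w z)" using ins_other[of "Suc p" w y z] bz pl wp by simp
      then show ?thesis using av by blast
    qed
  qed
  have "form (pos w y)" for y
  proof (cases "y \<in> A")
    case True then show ?thesis using form4 unfolding form_def by blast
  next
    case False
    then have "pos w y = {}" using sw by (auto simp: pos_def dest: nth_mem)
    then show ?thesis unfolding form_def by simp
  qed
  then obtain u where wu: "w = dbl u" using form_dbl by blast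
  have "count (mset u) y = count (mset_set A + mset_set A) y" for y
  proof (cases "y \<in> A")
    case True
    then obtain a b where "a + 2 \<le> b" "pos w y = {a, Suc a, b, Suc b}" using form4 by blast
    then have "card (pos w y) = 4" by simp
    then have "2 * count (mset u) y = 4" using count_pos[of w y] wu by simp
    then show ?thesis using count_M[OF fA] True by simp
  next
    case False
    then have "y \<notin> set u" using sw wu by auto
    then show ?thesis using count_M[OF fA] False by (simp add: count_mset_0_iff)
  qed
  then have "mset u = mset_set A + mset_set A" by (rule multiset_eqI)
  with wu show ?thesis by blast
qed

theorem mainTheorem4:
  fixes A :: "'a set" and k :: nat
  assumes "k > 0" and "finite A" and "card A = k"
  shows "finite {w. extremal_XYXYX A w} \<and>
         real (card {w. extremal_XYXYX A w}) = real (fact (2 * k)) / (2::real) ^ k"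
proof -
  define M where "M = mset_set A + mset_set A"
  have eq: "{w. extremal_XYXYX A w} = dbl ` permutations_of_multiset M"
  proof
    show "{w. extremal_XYXYX A w} \<subseteq> dbl ` permutations_of_multiset M"
      using ext_imp[OF assms(2)] by (auto simp: M_def permutations_of_multiset_def)
    show "dbl ` permutations_of_multiset M \<subseteq> {w. extremal_XYXYX A w}"
      using imp_ext[OF assms(2)] by (auto simp: M_def permutations_of_multiset_def)
  qed
  have inj: "inj_on dbl (permutations_of_multiset M)"
    by (meson dbl_inj inj_onI)
  have c1: "card {w. extremal_XYXYX A w} = card (permutations_of_multiset M)"
    unfolding eq by (rule card_image[OF inj])
  have sM: "set_mset M = A" using assms(2) by (simp add: M_def)
  have cM: "count M x = 2" if "x \<in> A" for x using that assms(2) by (simp add: M_def count_M)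
  have "(\<Prod>x\<in>set_mset M. fact (count M x)) = (\<Prod>x\<in>A. (2::nat))"
    unfolding sM by (rule prod.cong) (simp_all add: cM)
  also have "\<dots> = 2 ^ k" using assms(3) by simp
  finally have pr: "(\<Prod>x\<in>set_mset M. fact (count M x)) = (2::nat) ^ k" .
  have sz: "size M = 2 * k" using assms(2,3) by (simp add: M_def)
  have "card (permutations_of_multiset M) * 2 ^ k = fact (2 * k)"
    using card_permutations_of_multiset_aux[of M] pr sz by simp
  then have "real (card (permutations_of_multiset M)) * 2 ^ k = real (fact (2 * k))"
    by (metis of_nat_mult of_nat_numeral of_nat_power)
  then have "real (card (permutations_of_multiset M)) = real (fact (2 * k)) / 2 ^ k"
    by (simp add: field_simps)
  moreover have "finite {w. extremal_XYXYX A w}" unfolding eq by simp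
  ultimately show ?thesis using c1 by simp
qed

end
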